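(* Let $(\mathbf X,\mathbf Y)$ be a general correlated source satisfying the conditional strong converse property, i.e. $\underline H(\mathbf X|\mathbf Y)=\overline H(\mathbf X|\mathbf Y)$. Then for any $\varepsilon\in[0,1]$, \[R^\varepsilon_{com}(\mathbf X|\mathbf Y)=(1-\varepsilon)\underline H(\mathbf X|\mathbf Y)=(1-\varepsilon)\overline H(\mathbf X|\mathbf Y).\]
   Context: A general correlated source $(\mathbf X,\mathbf Y)=\{(X^n,Y^n)\}_{n\ge1}$ is an arbitrary sequence of pairs of random variables on $\mathcal X^n\times\mathcal Y^n$, $\mathcal X,\mathcal Y$ finite or countably infinite (no structural assumptions). Logs base 2. $\mathrm{p\text{-}limsup}_n Z_n=\inf\{\alpha:\lim_n\Pr\{Z_n>\alpha\}=0\}$, $\mathrm{p\text{-}liminf}_n Z_n=\sup\{\beta:\lim_n\Pr\{Z_n<\beta\}=0\}$; $\overline H(\mathbf X|\mathbf Y)=\mathrm{p\text{-}limsup}_n\frac1n\log\frac1{P_{X^n|Y^n}(X^n|Y^n)}$, $\underline H(\mathbf X|\mathbf Y)=\mathrm{p\text{-}liminf}_n\frac1n\log\frac1{P_{X^n|Y^n}(X^n|Y^n)}$. Coding with common side-information: a blocklength-$n$ code is $(\varphi_n,\psi_n)$, $\varphi_n:\mathcal X^n\times\mathcal Y^n\to\{0,1\}^*$ with $\{\varphi_n(x^n|y^n):x^n\}$ prefix-free for each $y^n$, $\psi_n:\{0,1\}^*\times\mathcal Y^n\to\mathcal X^n$; error probability $\Pr\{\psi_n(\varphi_n(X^n|Y^n),Y^n)\ne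 X^n\}$; $\ell_n(x^n|y^n)$ the codeword length. For $\varepsilon\in[0,1]$, $R$ is $\varepsilon$-achievable if there are codes with $\limsup_n$ error probability $\le\varepsilon$ and $\limsup_n\frac1n\mathbb E[\ell_n(X^n|Y^n)]\le R$; $R^\varepsilon_{com}(\mathbf X|\mathbf Y)$ is the infimum of $\varepsilon$-achievable rates. *)

theory Defs
  imports "HOL-Probability.Probability" "HOL-Library.Sublist"
begin

definition general_source :: "(nat \<Rightarrow> ('a list \<times> 'b list) pmf) \<Rightarrow> bool" where
  "general_source P \<longleftrightarrow>
     (\<forall>n\<ge>1. set_pmf (P n) \<subseteq> {(x, y). length x = n \<and> length y = n})"

definition cond_prob :: "(nat \<Rightarrow> ('a list \<times> 'b list) pmf) \<Rightarrow> nat \<Rightarrow> 'a list \<Rightarrow> 'b list \<Rightarrow> real" where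
  "cond_prob P n x y = pmf (P n) (x, y) / pmf (map_pmf snd (P n)) y"

definition cond_info_dens :: "(nat \<Rightarrow> ('a list \<times> 'b list) pmf) \<Rightarrow> nat \<Rightarrow> 'a list \<times> 'b list \<Rightarrow> real" where
  "cond_info_dens P n xy = (1 / real n) * log 2 (1 / cond_prob P n (fst xy) (snd xy))"

definition p_limsup :: "(nat \<Rightarrow> 'c pmf) \<Rightarrow> (nat \<Rightarrow> 'c \<Rightarrow> real) \<Rightarrow> ereal" where
  "p_limsup M Z = Inf {\<alpha>::ereal.
     (\<lambda>n. measure_pmf.prob (M n) {\<omega>. ereal (Z n \<omega>) > \<alpha>}) \<longlonglongrightarrow> 0}"

definition p_liminf :: "(nat \<Rightarrow> 'c pmf) \<Rightarrow> (nat \<Rightarrow> 'c \<Rightarrow> real) \<Rightarrow> ereal" where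
  "p_liminf M Z = Sup {\<beta>::ereal.
     (\<lambda>n. measure_pmf.prob (M n) {\<omega>. ereal (Z n \<omega>) < \<beta>}) \<longlonglongrightarrow> 0}"

definition cond_spectral_sup_entropy :: "(nat \<Rightarrow> ('a list \<times> 'b list) pmf) \<Rightarrow> ereal" where
  "cond_spectral_sup_entropy P = p_limsup P (cond_info_dens P)"

definition cond_spectral_inf_entropy :: "(nat \<Rightarrow> ('a list \<times> 'b list) pmf) \<Rightarrow> ereal" where
  "cond_spectral_inf_entropy P = p_liminf P (cond_info_dens P)"

definition prefix_free :: "bool list set \<Rightarrow> bool" where
  "prefix_free C \<longleftrightarrow> (\<forall>c\<in>C. \<forall>c'\<in>C. c \<noteq> c' \<longrightarrow> \<not> prefix c c')"

definition valid_code :: "nat \<Rightarrow> ('a list \<Rightarrow> 'b list \<Rightarrow> bool list) \<Rightarrow> bool" where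
  "valid_code n enc \<longleftrightarrow>
     (\<forall>y. length y = n \<longrightarrow> prefix_free {enc x y | x. length x = n})"

definition error_prob :: "(nat \<Rightarrow> ('a list \<times> 'b list) pmf) \<Rightarrow> nat \<Rightarrow>
    ('a list \<Rightarrow> 'b list \<Rightarrow> bool list) \<Rightarrow> (bool list \<Rightarrow> 'b list \<Rightarrow> 'a list) \<Rightarrow> real" where
  "error_prob P n enc dec = measure_pmf.prob (P n) {(x, y). dec (enc x y) y \<noteq> x}"

definition exp_length :: "(nat \<Rightarrow> ('a list \<times> 'b list) pmf) \<Rightarrow> nat \<Rightarrow>
    ('a list \<Rightarrow> 'b list \<Rightarrow> bool list) \<Rightarrow> ennreal" where
  "exp_length P n enc = (\<integral>\<^sup>+ xy. ennreal (real (length (enc (fst xy) (snd xy)))) \<partial>measure_pmf (P n))"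

definition achievable_com :: "(nat \<Rightarrow> ('a list \<times> 'b list) pmf) \<Rightarrow> real \<Rightarrow> real \<Rightarrow> bool" where
  "achievable_com P \<epsilon> R \<longleftrightarrow>
     (\<exists>(enc :: nat \<Rightarrow> 'a list \<Rightarrow> 'b list \<Rightarrow> bool list) (dec :: nat \<Rightarrow> bool list \<Rightarrow> 'b list \<Rightarrow> 'a list).
        (\<forall>n\<ge>1. valid_code n (enc n)) \<and>
        limsup (\<lambda>n. ereal (error_prob P n (enc n) (dec n))) \<le> ereal \<epsilon> \<and>
        limsup (\<lambda>n. ereal (1 / real n) * enn2ereal (exp_length P n (enc n))) \<le> ereal R)"

definition R_com :: "(nat \<Rightarrow> ('a list \<times> 'b list) pmf) \<Rightarrow> real \<Rightarrow> ereal" where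
  "R_com P \<epsilon> = Inf (ereal ` {R. achievable_com P \<epsilon> R})"

end

theory Submission
  imports Defs
begin

lemma select_subset:
  fixes M :: "'c::countable pmf"
  assumes eta: "\<forall>z\<in>B. pmf M z \<le> \<eta>" and "0 \<le> \<eta>" and "0 \<le> t" and t: "t \<le> measure M B"
  shows "\<exists>G\<subseteq>B. t - \<eta> \<le> measure M G \<and> measure M G \<le> t"
proof -
  define Gk where "Gk k = {z\<in>B. to_nat z < k}" for k
  show ?thesis
  proof (cases "\<exists>k. measure M (Gk k) > t")
    case True
    define k0 where "k0 = (LEAST k. measure M (Gk k) > t)"
    have k0: "measure M (Gk k0) > t" unfolding k0_def by (rule LeastI_ex[OF True])
    have "Gk 0 = {}" by (simp add: Gk_def)
    have "k0 \<noteq> 0" proof assume "k0 = 0" thus False using k0 \<open>Gk 0 = {}\<close> assms by auto qed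
    then obtain j where j: "k0 = Suc j" by (cases k0) auto
    have Gj: "measure M (Gk j) \<le> t" using not_less_Least[of j "\<lambda>k. measure M (Gk k) > t"] j k0_def by force
    have sub: "Gk k0 \<subseteq> Gk j \<union> {z\<in>B. to_nat z = j}" by (auto simp: Gk_def j)
    have "measure M {z\<in>B. to_nat z = j} \<le> \<eta>"
    proof (cases "{z\<in>B. to_nat z = j} = {}")
      case True thus ?thesis using assms by (simp only:) simp
    next
      case False
      then obtain z where z: "z \<in> B" "to_nat z = j" by auto
      hence "{z\<in>B. to_nat z = j} = {z}" by auto
      thus ?thesis using eta z by (simp add: measure_pmf_single)
    qed
    moreover have "measure M (Gk k0) \<le> measure M (Gk j) + measure M {z\<in>B. to_nat z = j}"
      by (rule order.trans[OF measure_pmf.finite_measure_mono[OF sub]]) (auto intro: measure_Un_le)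
    ultimately show ?thesis using k0 Gj by (intro exI[of _ "Gk j"]) (auto simp: Gk_def)
  next
    case False
    have "(\<lambda>k. measure M (Gk k)) \<longlonglongrightarrow> measure M (\<Union>k. Gk k)"
      by (rule measure_pmf.finite_Lim_measure_incseq) (auto simp: incseq_def Gk_def)
    moreover have "(\<Union>k. Gk k) = B" by (auto simp: Gk_def)
    ultimately have "measure M B \<le> t" using False by (intro LIMSEQ_le_const2) (auto simp: not_less)
    thus ?thesis using t assms by (intro exI[of _ B]) auto
  qed
qed
lemma pmf_le_marg: "pmf (P n) (x, y) \<le> pmf (map_pmf snd (P n)) y"
proof -
  have "pmf (P n) (x, y) = measure (P n) {(x,y)}" by (simp add: measure_pmf_single)
  also have "\<dots> \<le> measure (P n) (snd -` {y})" by (rule measure_pmf.finite_measure_mono) auto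
  finally show ?thesis by (simp add: pmf_map)
qed

lemma pmf_eq_cond: "pmf (P n) (x, y) = cond_prob P n x y * pmf (map_pmf snd (P n)) y"
proof (cases "pmf (map_pmf snd (P n)) y = 0")
  case True
  then show ?thesis using pmf_le_marg[of P n x y] by (simp add: cond_prob_def)
next
  case False
  then show ?thesis by (simp add: cond_prob_def)
qed

lemma cond_prob_nonneg: "0 \<le> cond_prob P n x y"
  by (simp add: cond_prob_def)

lemma cond_prob_le1: "cond_prob P n x y \<le> 1"
  using pmf_le_marg[of P n x y] pmf_nonneg[of "map_pmf snd (P n)" y] by (auto simp: cond_prob_def divide_le_eq_1)

lemma meas_graph_le:
  fixes P :: "nat \<Rightarrow> ('a list \<times> 'b list) pmf"
  assumes "0 \<le> c"
  shows "measure (P n) {(x,y). x = g y \<and> cond_prob P n x y \<le> c} \<le> c"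
proof -
  define Y0 where "Y0 = {y. cond_prob P n (g y) y \<le> c}"
  define f where "f y = (g y, y)" for y
  have D: "{(x,y). x = g y \<and> cond_prob P n x y \<le> c} = f ` Y0" by (auto simp: f_def Y0_def)
  have inj: "inj_on f Y0" by (auto simp: inj_on_def f_def)
  have "emeasure (P n) (f ` Y0) = (\<integral>\<^sup>+y. pmf (P n) (f y) \<partial>count_space Y0)"
    using nn_integral_pmf'[OF inj] by simp
  also have "\<dots> \<le> (\<integral>\<^sup>+y. ennreal c * pmf (map_pmf snd (P n)) y \<partial>count_space Y0)"
  proof (rule nn_integral_mono)
    fix y assume "y \<in> space (count_space Y0)"
    hence "cond_prob P n (g y) y \<le> c" by (simp add: Y0_def)
    hence "pmf (P n) (f y) \<le> c * pmf (map_pmf snd (P n)) y"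
      unfolding f_def pmf_eq_cond by (intro mult_right_mono) auto
    thus "ennreal (pmf (P n) (f y)) \<le> ennreal c * ennreal (pmf (map_pmf snd (P n)) y)"
      using assms by (simp add: ennreal_mult[symmetric])
  qed
  also have "\<dots> = ennreal c * emeasure (map_pmf snd (P n)) Y0"
    by (simp add: nn_integral_cmult nn_integral_pmf)
  also have "\<dots> \<le> ennreal c * 1"
    by (intro mult_left_mono) (auto simp: measure_pmf.emeasure_le_1)
  finally have "emeasure (P n) (f ` Y0) \<le> ennreal c" by simp
  thus ?thesis unfolding D using assms
    by (simp add: measure_pmf.emeasure_eq_measure)
qed

lemma sum_cond_le1:
  fixes P :: "nat \<Rightarrow> ('a list \<times> 'b list) pmf"
  assumes "finite S"
  shows "(\<Sum>x\<in>S. cond_prob P n x y) \<le> 1"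
proof (cases "pmf (map_pmf snd (P n)) y = 0")
  case True
  thus ?thesis by (simp add: cond_prob_def)
next
  case False
  hence pos: "pmf (map_pmf snd (P n)) y > 0" using pmf_nonneg[of "map_pmf snd (P n)" y] by linarith
  have inj: "inj_on (\<lambda>x. (x, y)) S" by (auto simp: inj_on_def)
  have "(\<Sum>x\<in>S. cond_prob P n x y) * pmf (map_pmf snd (P n)) y = (\<Sum>x\<in>S. pmf (P n) (x, y))"
    by (simp add: pmf_eq_cond sum_distrib_right)
  also have "\<dots> = measure (P n) ((\<lambda>x. (x, y)) ` S)"
    using assms inj by (simp add: measure_measure_pmf_finite sum.reindex)
  also have "\<dots> \<le> measure (P n) (snd -` {y})" by (rule measure_pmf.finite_measure_mono) auto
  also have "\<dots> = 1 * pmf (map_pmf snd (P n)) y" by (simp add: pmf_map)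
  finally show ?thesis using pos by (simp only: mult_le_cancel_right)
qed

lemma big_cond_finite:
  fixes P :: "nat \<Rightarrow> ('a list \<times> 'b list) pmf"
  assumes c: "0 < c"
  shows "finite {x. c \<le> cond_prob P n x y} \<and> real (card {x. c \<le> cond_prob P n x y}) * c \<le> 1"
proof -
  let ?A = "{x. c \<le> cond_prob P n x y}"
  have bound: "real (card S) * c \<le> 1" if "finite S" "S \<subseteq> ?A" for S
  proof -
    have "real (card S) * c = (\<Sum>x\<in>S. c)" by simp
    also have "\<dots> \<le> (\<Sum>x\<in>S. cond_prob P n x y)" using that by (intro sum_mono) auto
    also have "\<dots> \<le> 1" using sum_cond_le1 that by blast
    finally show ?thesis .
  qed
  have fin: "finite ?A"
  proof (rule ccontr)
    assume "infinite ?A"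
    then obtain S where S: "finite S" "card S = nat \<lceil>1/c\<rceil> + 1" "S \<subseteq> ?A"
      using infinite_arbitrarily_large by blast
    have "real (card S) * c > 1"
    proof -
      have "real (card S) > 1 / c" using S(2) by linarith
      thus ?thesis using c by (simp add: field_simps)
    qed
    thus False using bound S by force
  qed
  thus ?thesis using bound[OF fin] by simp
qed

lemma cond_pos_support:
  fixes P :: "nat \<Rightarrow> ('a list \<times> 'b list) pmf" and n x y
  assumes "(x, y) \<in> set_pmf (P n)"
  shows "0 < cond_prob P n x y"
proof -
  have "0 < pmf (P n) (x, y)" using assms by (simp add: set_pmf_eq pmf_positive)
  hence "0 < cond_prob P n x y * pmf (map_pmf snd (P n)) y" by (simp add: pmf_eq_cond)
  thus ?thesis using cond_prob_nonneg[of P n x y] pmf_nonneg[of "map_pmf snd (P n)" y]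
    by (simp add: zero_less_mult_iff)
qed

lemma Z_eq: "0 < cond_prob P n x y \<Longrightarrow> cond_info_dens P n (x, y) = - log 2 (cond_prob P n x y) / real n"
  by (simp add: cond_info_dens_def log_divide)

lemma Z_less_iff:
  assumes "0 < n" "0 < cond_prob P n x y"
  shows "cond_info_dens P n (x, y) < M \<longleftrightarrow> 2 powr (-(real n * M)) < cond_prob P n x y"
proof -
  have "cond_info_dens P n (x, y) < M \<longleftrightarrow> -(real n * M) < log 2 (cond_prob P n x y)"
    using assms by (simp add: Z_eq[OF assms(2)] field_simps) auto
  also have "\<dots> \<longleftrightarrow> 2 powr (-(real n * M)) < cond_prob P n x y"
    using assms by (intro less_log_iff) auto
  finally show ?thesis .
qed

lemma Z_greater_iff:
  assumes "0 < n" "0 < cond_prob P n x y"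
  shows "cond_info_dens P n (x, y) > M \<longleftrightarrow> cond_prob P n x y < 2 powr (-(real n * M))"
proof -
  have "cond_info_dens P n (x, y) > M \<longleftrightarrow> log 2 (cond_prob P n x y) < -(real n * M)"
    using assms by (simp add: Z_eq[OF assms(2)] field_simps) auto
  also have "\<dots> \<longleftrightarrow> cond_prob P n x y < 2 powr (-(real n * M))"
    using assms by (intro log_less_iff) auto
  finally show ?thesis .
qed

lemma tail_low:
  assumes "ereal M < cond_spectral_inf_entropy P"
  shows "(\<lambda>n. measure (P n) {(x,y). 2 powr (-(real n * M)) < cond_prob P n x y}) \<longlonglongrightarrow> 0"
proof -
  obtain \<beta> where b: "(\<lambda>n. measure (P n) {\<omega>. ereal (cond_info_dens P n \<omega>) < \<beta>}) \<longlonglongrightarrow> 0" "ereal M < \<beta>"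
    using assms unfolding cond_spectral_inf_entropy_def p_liminf_def less_Sup_iff by blast
  have le: "measure (P n) {(x,y). 2 powr (-(real n * M)) < cond_prob P n x y}
      \<le> measure (P n) {\<omega>. ereal (cond_info_dens P n \<omega>) < \<beta>}" if "n > 0" for n
  proof -
    have "measure (P n) {(x,y). 2 powr (-(real n * M)) < cond_prob P n x y}
       = measure (P n) ({(x,y). 2 powr (-(real n * M)) < cond_prob P n x y} \<inter> set_pmf (P n))"
      by (simp add: measure_Int_set_pmf)
    also have "\<dots> \<le> measure (P n) {\<omega>. ereal (cond_info_dens P n \<omega>) < \<beta>}"
    proof (rule measure_pmf.finite_measure_mono)
      show "{(x,y). 2 powr (-(real n * M)) < cond_prob P n x y} \<inter> set_pmf (P n)
          \<subseteq> {\<omega>. ereal (cond_info_dens P n \<omega>) < \<beta>}"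
      proof clarify
        fix x y assume xy: "2 powr (-(real n * M)) < cond_prob P n x y" "(x, y) \<in> set_pmf (P n)"
        have "cond_info_dens P n (x, y) < M"
          using Z_less_iff[OF that cond_pos_support[where P=P and n=n and x=x and y=y, OF xy(2)]] xy(1) by simp
        hence "ereal (cond_info_dens P n (x, y)) < ereal M" by simp
        thus "ereal (cond_info_dens P n (x, y)) < \<beta>" using b(2) by (rule less_trans)
      qed
    qed simp
    finally show ?thesis .
  qed
  show ?thesis
    by (rule tendsto_sandwich[OF _ _ tendsto_const b(1)])
       (auto intro!: eventually_mono[OF eventually_gt_at_top[of 0]] le)
qed

lemma tail_high:
  assumes "cond_spectral_sup_entropy P < ereal M"
  shows "(\<lambda>n. measure (P n) {(x,y). cond_prob P n x y < 2 powr (-(real n * M))}) \<longlonglongrightarrow> 0"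
proof -
  obtain \<alpha> where b: "(\<lambda>n. measure (P n) {\<omega>. ereal (cond_info_dens P n \<omega>) > \<alpha>}) \<longlonglongrightarrow> 0" "\<alpha> < ereal M"
    using assms unfolding cond_spectral_sup_entropy_def p_limsup_def Inf_less_iff by blast
  have le: "measure (P n) {(x,y). cond_prob P n x y < 2 powr (-(real n * M))}
      \<le> measure (P n) {\<omega>. ereal (cond_info_dens P n \<omega>) > \<alpha>}" if "n > 0" for n
  proof -
    have "measure (P n) {(x,y). cond_prob P n x y < 2 powr (-(real n * M))}
       = measure (P n) ({(x,y). cond_prob P n x y < 2 powr (-(real n * M))} \<inter> set_pmf (P n))"
      by (simp add: measure_Int_set_pmf)
    also have "\<dots> \<le> measure (P n) {\<omega>. ereal (cond_info_dens P n \<omega>) > \<alpha>}"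
    proof (rule measure_pmf.finite_measure_mono)
      show "{(x,y). cond_prob P n x y < 2 powr (-(real n * M))} \<inter> set_pmf (P n)
          \<subseteq> {\<omega>. ereal (cond_info_dens P n \<omega>) > \<alpha>}"
      proof clarify
        fix x y assume xy: "cond_prob P n x y < 2 powr (-(real n * M))" "(x, y) \<in> set_pmf (P n)"
        have "cond_info_dens P n (x, y) > M"
          using Z_greater_iff[OF that cond_pos_support[where P=P and n=n and x=x and y=y, OF xy(2)]] xy(1) by simp
        hence "ereal (cond_info_dens P n (x, y)) > ereal M" by simp
        thus "ereal (cond_info_dens P n (x, y)) > \<alpha>" using b(2) by (rule less_trans[rotated])
      qed
    qed simp
    finally show ?thesis .
  qed
  show ?thesis
    by (rule tendsto_sandwich[OF _ _ tendsto_const b(1)])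
       (auto intro!: eventually_mono[OF eventually_gt_at_top[of 0]] le)
qed

lemma inf_entropy_nonneg: "0 \<le> cond_spectral_inf_entropy P"
proof -
  have "measure (P n) {\<omega>. ereal (cond_info_dens P n \<omega>) < 0} = 0" for n
  proof -
    have "{\<omega>. ereal (cond_info_dens P n \<omega>) < 0} \<inter> set_pmf (P n) = {}"
    proof safe
      fix x y assume xy: "ereal (cond_info_dens P n (x, y)) < 0" "(x, y) \<in> set_pmf (P n)"
      have "log 2 (cond_prob P n x y) \<le> 0"
        using cond_pos_support[where P=P and n=n and x=x and y=y, OF xy(2)] cond_prob_le1[of P n x y] by simp
      hence "cond_info_dens P n (x, y) \<ge> 0" using cond_pos_support[where P=P and n=n and x=x and y=y, OF xy(2)] by (simp add: Z_eq divide_nonpos_nonneg)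
      thus "(x, y) \<in> {}" using xy(1) by simp
    qed
    thus ?thesis using measure_Int_set_pmf[of "P n" "{\<omega>. ereal (cond_info_dens P n \<omega>) < 0}"] by simp
  qed
  thus ?thesis unfolding cond_spectral_inf_entropy_def p_liminf_def
    by (intro Sup_upper) simp
qed

lemma card_short_lists: "finite {w::bool list. length w \<le> k} \<and> card {w::bool list. length w \<le> k} < 2 ^ (k + 1)"
proof -
  have eq: "{w::bool list. length w \<le> k} = {xs. set xs \<subseteq> UNIV \<and> length xs \<le> k}" by simp
  have "card {w::bool list. length w \<le> k} = (\<Sum>i\<le>k. 2 ^ i)"
    unfolding eq by (subst card_lists_length_le) auto
  also have "\<dots> = (\<Sum>i=0..<Suc k. (2::nat) ^ i)" by (rule sum.cong) auto
  also have "\<dots> = 2 ^ (k+1) - 1" by (simp add: sum_power2)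
  finally have "card {w::bool list. length w \<le> k} < 2 ^ (k + 1)" by simp
  moreover have "finite {w::bool list. length w \<le> k}" unfolding eq by (rule finite_lists_length_le) simp
  ultimately show ?thesis by simp
qed

lemma bad_bound:
  fixes P :: "nat \<Rightarrow> ('a list \<times> 'b list) pmf"
    and enc :: "'a list \<Rightarrow> 'b list \<Rightarrow> bool list" and dec :: "bool list \<Rightarrow> 'b list \<Rightarrow> 'a list"
  assumes c: "0 \<le> c"
  shows "measure (P n) {(x,y). dec (enc x y) y = x \<and> length (enc x y) \<le> k}
     \<le> measure (P n) {(x,y). c < cond_prob P n x y} + 2 ^ (k+1) * c"
proof -
  define W where "W = {w::bool list. length w \<le> k}"
  define A where "A w = {(x,y). x = dec w y \<and> cond_prob P n x y \<le> c}" for w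
  have W1: "finite W" "card W < 2 ^ (k+1)"
    using card_short_lists[of k] unfolding W_def by auto
  hence "real (card W) \<le> real ((2::nat) ^ (k+1))" by (simp only: of_nat_le_iff)
  hence W: "finite W" "real (card W) \<le> 2 ^ (k+1)" using W1 by simp_all
  have "{(x,y). dec (enc x y) y = x \<and> length (enc x y) \<le> k}
      \<subseteq> {(x,y). c < cond_prob P n x y} \<union> (\<Union>w\<in>W. A w)"
    by (force simp: W_def A_def)
  hence "measure (P n) {(x,y). dec (enc x y) y = x \<and> length (enc x y) \<le> k}
      \<le> measure (P n) ({(x,y). c < cond_prob P n x y} \<union> (\<Union>w\<in>W. A w))"
    by (intro measure_pmf.finite_measure_mono) auto
  also have "\<dots> \<le> measure (P n) {(x,y). c < cond_prob P n x y} + measure (P n) (\<Union>w\<in>W. A w)"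
    by (rule measure_Un_le) auto
  also have "measure (P n) (\<Union>w\<in>W. A w) \<le> (\<Sum>w\<in>W. measure (P n) (A w))"
    by (rule measure_pmf.finite_measure_subadditive_finite) (use W in auto)
  also have "\<dots> \<le> (\<Sum>w\<in>W. c)"
    by (intro sum_mono) (unfold A_def, rule meas_graph_le[OF c])
  also have "\<dots> = real (card W) * c" by simp
  also have "\<dots> \<le> 2 ^ (k+1) * c" using W c by (intro mult_right_mono) auto
  finally show ?thesis by simp
qed

lemma len_bound:
  fixes P :: "nat \<Rightarrow> ('a list \<times> 'b list) pmf"
    and enc :: "'a list \<Rightarrow> 'b list \<Rightarrow> bool list" and dec :: "bool list \<Rightarrow> 'b list \<Rightarrow> 'a list"
  shows "ereal (real (k+1) * (1 - error_prob P n enc dec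
           - measure (P n) {(x,y). dec (enc x y) y = x \<and> length (enc x y) \<le> k}))
        \<le> enn2ereal (exp_length P n enc)"
proof -
  define Bad where "Bad = {(x,y). dec (enc x y) y = x \<and> length (enc x y) \<le> k}"
  define Good where "Good = {(x,y). dec (enc x y) y = x \<and> k < length (enc x y)}"
  define Err where "Err = {(x,y). dec (enc x y) y \<noteq> x}"
  have "UNIV = Err \<union> (Good \<union> Bad)" by (auto simp: Err_def Good_def Bad_def)
  hence "1 \<le> measure (P n) Err + measure (P n) (Good \<union> Bad)"
    using measure_Un_le[of Err "measure_pmf (P n)" "Good \<union> Bad"] by simp
  also have "measure (P n) (Good \<union> Bad) \<le> measure (P n) Good + measure (P n) Bad"
    by (rule measure_Un_le) auto
  finally have q: "1 - measure (P n) Err - measure (P n) Bad \<le> measure (P n) Good" by simp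
  have "ennreal (real (k+1) * measure (P n) Good) = (\<integral>\<^sup>+ xy. ennreal (real (k+1)) * indicator Good xy \<partial>measure_pmf (P n))"
    by (simp add: nn_integral_cmult measure_pmf.emeasure_eq_measure ennreal_mult)
  also have "\<dots> \<le> exp_length P n enc"
    unfolding exp_length_def
  proof (intro nn_integral_mono)
    fix xy :: "'a list \<times> 'b list"
    show "ennreal (real (k+1)) * indicator Good xy \<le> ennreal (real (length (enc (fst xy) (snd xy))))"
    proof (cases "xy \<in> Good")
      case True
      hence "k + 1 \<le> length (enc (fst xy) (snd xy))" by (auto simp: Good_def)
      hence "real (k+1) \<le> real (length (enc (fst xy) (snd xy)))" by (simp only: of_nat_le_iff)
      thus ?thesis using True by (simp add: ennreal_leI del: of_nat_Suc of_nat_add)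
    qed simp
  qed
  finally have E: "ennreal (real (k+1) * measure (P n) Good) \<le> exp_length P n enc" .
  show ?thesis
  proof (cases "0 \<le> 1 - measure (P n) Err - measure (P n) Bad")
    case False
    hence "ereal (real (k+1) * (1 - measure (P n) Err - measure (P n) Bad)) \<le> 0"
      by (simp add: mult_nonneg_nonpos)
    thus ?thesis unfolding error_prob_def Err_def Bad_def
      using enn2ereal_nonneg order.trans by blast
  next
    case True
    have "ereal (real (k+1) * (1 - measure (P n) Err - measure (P n) Bad)) \<le> ereal (real (k+1) * measure (P n) Good)"
      using q by (simp add: mult_left_mono)
    also have "\<dots> = enn2ereal (ennreal (real (k+1) * measure (P n) Good))" by simp
    also have "\<dots> \<le> enn2ereal (exp_length P n enc)" using E by (simp add: less_eq_ennreal.rep_eq)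
    finally show ?thesis unfolding error_prob_def Err_def Bad_def .
  qed
qed

lemma powr_decay: "0 < c \<Longrightarrow> (\<lambda>n::nat. 2 * 2 powr (-(c * real n)) :: real) \<longlonglongrightarrow> 0"
proof -
  assume c: "0 < c"
  have eq: "2 powr (-(c * real n)) = (2 powr (-c)) ^ n" for n
    by (simp add: powr_powr powr_realpow[symmetric])
  have "2 powr (-c) < 2 powr 0" using c by (intro powr_less_mono) auto
  hence "2 powr (-c) < (1::real)" by simp
  hence "(\<lambda>n. (2 powr (-c)) ^ n) \<longlonglongrightarrow> 0" by (intro LIMSEQ_realpow_zero) auto
  hence "(\<lambda>n. 2 * (2 powr (-c)) ^ n) \<longlonglongrightarrow> 2 * 0" by (intro tendsto_mult tendsto_const)
  thus ?thesis by (simp add: eq)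
qed

lemma converse_step:
  fixes P :: "nat \<Rightarrow> ('a list \<times> 'b list) pmf"
    and enc :: "'a list \<Rightarrow> 'b list \<Rightarrow> bool list" and dec :: "bool list \<Rightarrow> 'b list \<Rightarrow> 'a list"
  assumes n: "0 < n" and a: "0 < a" and aM: "a < M"
    and err: "error_prob P n enc dec < \<epsilon> + \<delta>"
    and rate: "ereal (1 / real n) * enn2ereal (exp_length P n enc) < ereal (R + \<delta>)"
    and m3: "measure (P n) {(x,y). 2 powr (-(real n * M)) < cond_prob P n x y} < \<delta>"
    and m4: "2 * 2 powr (-((M - a) * real n)) < \<delta>"
  shows "a * (1 - \<epsilon> - 3 * \<delta>) < R + \<delta>"
proof -
  define k where "k = nat \<lfloor>real n * a\<rfloor>"
  define c where "c = 2 powr (-(real n * M))"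
  define bad where "bad = measure (P n) {(x,y). dec (enc x y) y = x \<and> length (enc x y) \<le> k}"
  have k1: "real k \<le> real n * a" using a n by (simp add: k_def)
  have k2: "real n * a < real k + 1" using a n by (simp add: k_def)
  have "(2::real) ^ (k+1) * c = 2 * (2 powr real k * 2 powr (-(real n * M)))"
    by (simp add: c_def powr_realpow)
  also have "\<dots> = 2 * 2 powr (real k - real n * M)" by (simp add: powr_add[symmetric])
  also have "\<dots> \<le> 2 * 2 powr (-((M - a) * real n))"
    using k1 by (simp add: algebra_simps)
  finally have c2: "(2::real) ^ (k+1) * c < \<delta>" using m4 by simp
  have "bad \<le> measure (P n) {(x,y). c < cond_prob P n x y} + 2 ^ (k+1) * c"
    unfolding bad_def by (rule bad_bound) (simp add: c_def)
  hence bad: "bad < 2 * \<delta>" using m3 c2 unfolding c_def by simp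
  define q where "q = 1 - error_prob P n enc dec - bad"
  have q: "1 - \<epsilon> - 3 * \<delta> < q" using bad err unfolding q_def by simp
  have lb: "ereal (real (k+1) * q) \<le> enn2ereal (exp_length P n enc)"
    unfolding q_def bad_def by (rule len_bound)
  obtain r where r: "enn2ereal (exp_length P n enc) = ereal r" "0 \<le> r"
  proof (cases "enn2ereal (exp_length P n enc)")
    case (real r) thus ?thesis using that enn2ereal_nonneg[of "exp_length P n enc"] by auto
  next
    case PInf
    hence "ereal (1 / real n) * enn2ereal (exp_length P n enc) = \<infinity>" using n by simp
    thus ?thesis using rate by simp
  next
    case MInf thus ?thesis using enn2ereal_nonneg[of "exp_length P n enc"] by simp
  qed
  have rr: "r / real n < R + \<delta>" using rate r by simp
  have lr: "real (k+1) * q \<le> r" using lb r by simp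
  have "a * q \<le> r / real n"
  proof (cases "q \<le> 0")
    case True
    hence "a * q \<le> 0" using a by (simp add: mult_nonneg_nonpos)
    also have "0 \<le> r / real n" using r by simp
    finally show ?thesis .
  next
    case False
    have "a * real n \<le> real (k+1)" using k2 by (simp add: algebra_simps)
    hence "a * real n * q \<le> real (k+1) * q" using False by (intro mult_right_mono) auto
    also have "\<dots> \<le> r" by (rule lr)
    finally show ?thesis using n by (simp add: field_simps)
  qed
  moreover have "a * (1 - \<epsilon> - 3 * \<delta>) < a * q" using a q by simp
  ultimately show ?thesis using rr by linarith
qed

lemma converse:
  fixes P :: "nat \<Rightarrow> ('a list \<times> 'b list) pmf"
  assumes ach: "achievable_com P \<epsilon> R" and M: "ereal M < cond_spectral_inf_entropy P"
    and a: "0 < a" "a < M"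
  shows "a * (1 - \<epsilon>) \<le> R"
proof -
  obtain enc :: "nat \<Rightarrow> 'a list \<Rightarrow> 'b list \<Rightarrow> bool list" and dec :: "nat \<Rightarrow> bool list \<Rightarrow> 'b list \<Rightarrow> 'a list"
    where l1: "limsup (\<lambda>n. ereal (error_prob P n (enc n) (dec n))) \<le> ereal \<epsilon>"
      and l2: "limsup (\<lambda>n. ereal (1 / real n) * enn2ereal (exp_length P n (enc n))) \<le> ereal R"
    using ach unfolding achievable_com_def by blast
  show ?thesis
  proof (rule field_le_epsilon)
    fix e :: real assume e: "0 < e"
    define \<delta> where "\<delta> = e / (1 + 3 * a)"
    have d: "0 < \<delta>" using e a by (simp add: \<delta>_def)
    have de: "\<delta> * (1 + 3 * a) = e" using a by (simp add: \<delta>_def)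
    have E1: "eventually (\<lambda>n. ereal (error_prob P n (enc n) (dec n)) < ereal (\<epsilon> + \<delta>)) sequentially"
      by (rule Limsup_lessD) (use l1 d in \<open>auto intro: le_less_trans\<close>)
    have E2: "eventually (\<lambda>n. ereal (1 / real n) * enn2ereal (exp_length P n (enc n)) < ereal (R + \<delta>)) sequentially"
      by (rule Limsup_lessD) (use l2 d in \<open>auto intro: le_less_trans\<close>)
    have E3: "eventually (\<lambda>n. measure (P n) {(x,y). 2 powr (-(real n * M)) < cond_prob P n x y} < \<delta>) sequentially"
      by (rule order_tendstoD(2)[OF tail_low[OF M] d])
    have E4: "eventually (\<lambda>n. 2 * 2 powr (-((M - a) * real n)) < \<delta>) sequentially"
      by (rule order_tendstoD(2)[OF powr_decay d]) (use a in simp)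
    have "eventually (\<lambda>n. 0 < n \<and> ereal (error_prob P n (enc n) (dec n)) < ereal (\<epsilon> + \<delta>)
       \<and> ereal (1 / real n) * enn2ereal (exp_length P n (enc n)) < ereal (R + \<delta>)
       \<and> measure (P n) {(x,y). 2 powr (-(real n * M)) < cond_prob P n x y} < \<delta>
       \<and> 2 * 2 powr (-((M - a) * real n)) < \<delta>) sequentially"
      using E1 E2 E3 E4 eventually_gt_at_top[of 0] by eventually_elim auto
    then obtain n where n: "0 < n" "ereal (error_prob P n (enc n) (dec n)) < ereal (\<epsilon> + \<delta>)"
       "ereal (1 / real n) * enn2ereal (exp_length P n (enc n)) < ereal (R + \<delta>)"
       "measure (P n) {(x,y). 2 powr (-(real n * M)) < cond_prob P n x y} < \<delta>"
       "2 * 2 powr (-((M - a) * real n)) < \<delta>"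
      unfolding eventually_sequentially by blast
    have "a * (1 - \<epsilon> - 3 * \<delta>) < R + \<delta>"
      by (rule converse_step[OF n(1) a(1) a(2) _ n(3) n(4) n(5)]) (use n(2) in simp)
    thus "a * (1 - \<epsilon>) \<le> R + e" using de by (simp add: algebra_simps)
  qed
qed

lemma prefix_free_flag:
  assumes "C \<subseteq> {[False]} \<union> {True # w | w. length w = L}"
  shows "prefix_free C"
  unfolding prefix_free_def
proof (intro ballI impI)
  fix c c' assume cc: "c \<in> C" "c' \<in> C" "c \<noteq> c'"
  show "\<not> prefix c c'"
  proof
    assume p: "prefix c c'"
    then obtain zs where zs: "c' = c @ zs" by (auto simp: prefix_def)
    from cc(1,2) assms have "c = [False] \<or> (\<exists>w. c = True # w \<and> length w = L)"
      "c' = [False] \<or> (\<exists>w. c' = True # w \<and> length w = L)" by auto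
    thus False using zs cc(3) by auto
  qed
qed

lemma code_exists:
  fixes P :: "nat \<Rightarrow> ('a list \<times> 'b list) pmf" and n L :: nat
    and G :: "('a list \<times> 'b list) set"
  assumes G: "G \<subseteq> {(x,y). 2 powr (-real L) \<le> cond_prob P n x y}"
  shows "\<exists>(enc :: 'a list \<Rightarrow> 'b list \<Rightarrow> bool list) (dec :: bool list \<Rightarrow> 'b list \<Rightarrow> 'a list).
     valid_code n enc \<and> error_prob P n enc dec \<le> 1 - measure (P n) G
     \<and> exp_length P n enc \<le> ennreal (1 + real L * measure (P n) G)"
proof -
  define S where "S y = {x. 2 powr (-real L) \<le> cond_prob P n x y}" for y
  define WL where "WL = {w::bool list. length w = L}"
  have WL: "finite WL" "card WL = 2 ^ L"
  proof -
    have eq: "WL = {xs. set xs \<subseteq> (UNIV::bool set) \<and> length xs = L}" by (simp add: WL_def)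
    show "finite WL" unfolding eq by (rule finite_lists_length_eq) simp
    show "card WL = 2 ^ L" unfolding eq by (subst card_lists_length_eq) auto
  qed
  have Sy: "finite (S y) \<and> card (S y) \<le> card WL" for y
  proof -
    have fc: "finite (S y) \<and> real (card (S y)) * 2 powr (-real L) \<le> 1"
      unfolding S_def by (rule big_cond_finite) simp
    note fc
    moreover have "2 powr (-real L) * 2 ^ L = (1::real)"
      by (simp add: powr_minus powr_realpow field_simps)
    ultimately have "real (card (S y)) \<le> 2 ^ L"
      by (metis (no_types, lifting) mult.assoc mult_le_cancel_right_pos mult_1 zero_less_numeral zero_less_power)
    hence "card (S y) \<le> 2 ^ L" by (metis of_nat_le_iff of_nat_numeral of_nat_power)
    thus ?thesis using fc WL by auto
  qed
  have "\<forall>y. \<exists>f. f ` S y \<subseteq> WL \<and> inj_on f (S y)"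
    using Sy WL card_le_inj by blast
  then obtain idx where idx: "\<And>y. idx y ` S y \<subseteq> WL" "\<And>y. inj_on (idx y) (S y)" by metis
  define enc where "enc x y = (if (x,y) \<in> G then True # idx y x else [False])" for x y
  define dec where "dec c y = (if c \<noteq> [] \<and> hd c then inv_into (S y) (idx y) (tl c) else undefined)" for c y
  have GS: "(x,y) \<in> G \<Longrightarrow> x \<in> S y" for x y using G by (auto simp: S_def)
  have valid: "valid_code n enc"
    unfolding valid_code_def
  proof (intro allI impI prefix_free_flag[where L=L])
    fix y :: "'b list"
    show "{enc x y |x. length x = n} \<subseteq> {[False]} \<union> {True # w |w. length w = L}"
    proof (rule subsetI)
      fix c assume "c \<in> {enc x y |x. length x = n}"
      then obtain x where c: "c = enc x y" by blast
      show "c \<in> {[False]} \<union> {True # w |w. length w = L}"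
      proof (cases "(x,y) \<in> G")
        case True
        hence "idx y x \<in> WL" using idx(1)[of y] GS[of x y] by blast
        thus ?thesis using True c by (simp add: enc_def WL_def)
      qed (simp add: enc_def c)
    qed
  qed
  have correct: "(x,y) \<in> G \<Longrightarrow> dec (enc x y) y = x" for x y
    using GS[of x y] idx(2)[of y] by (simp add: enc_def dec_def)
  have "error_prob P n enc dec \<le> measure (P n) (UNIV - G)"
    unfolding error_prob_def by (rule measure_pmf.finite_measure_mono) (auto dest: correct)
  also have "\<dots> = 1 - measure (P n) G"
    using measure_pmf.prob_compl[of G "P n"] by simp
  finally have err: "error_prob P n enc dec \<le> 1 - measure (P n) G" .
  have "exp_length P n enc \<le> (\<integral>\<^sup>+ xy. 1 + ennreal (real L) * indicator G xy \<partial>measure_pmf (P n))"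
    unfolding exp_length_def
  proof (intro nn_integral_mono)
    fix xy :: "'a list \<times> 'b list"
    show "ennreal (real (length (enc (fst xy) (snd xy)))) \<le> 1 + ennreal (real L) * indicator G xy"
    proof (cases "xy \<in> G")
      case True
      obtain x y where xy: "xy = (x,y)" by (cases xy)
      have "length (enc x y) = L + 1" using True idx(1)[of y] GS[of x y] xy
        by (auto simp: enc_def WL_def)
      moreover have "ennreal (1 + real L) = 1 + ennreal (real L)" by (simp add: ennreal_plus)
      ultimately show ?thesis using True xy by simp
    next
      case False
      obtain x y where xy: "xy = (x,y)" by (cases xy)
      thus ?thesis using False by (simp add: enc_def)
    qed
  qed
  also have "\<dots> = 1 + ennreal (real L) * emeasure (P n) G"
    by (simp add: nn_integral_add nn_integral_cmult measure_pmf.emeasure_space_1)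
  also have "\<dots> = ennreal (1 + real L * measure (P n) G)"
    by (simp add: measure_pmf.emeasure_eq_measure ennreal_mult[symmetric] ennreal_plus)
  finally have el: "exp_length P n enc \<le> ennreal (1 + real L * measure (P n) G)" .
  show ?thesis using valid err el by blast
qed

lemma limsup_le_lim:
  fixes X :: "nat \<Rightarrow> ereal"
  assumes u: "u \<longlonglongrightarrow> 0" and ev: "eventually (\<lambda>n. X n \<le> ereal (r + u n)) sequentially"
  shows "limsup X \<le> ereal r"
proof -
  have "limsup X \<le> limsup (\<lambda>n. ereal (r + u n))" by (rule Limsup_mono[OF ev])
  also have "(\<lambda>n. ereal (r + u n)) \<longlonglongrightarrow> ereal (r + 0)"
    by (intro tendsto_intros u)
  hence "limsup (\<lambda>n. ereal (r + u n)) = ereal r" by (simp add: lim_imp_Limsup)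
  finally show ?thesis .
qed

lemma achievability:
  fixes P :: "nat \<Rightarrow> ('a::countable list \<times> 'b::countable list) pmf"
  assumes Hi: "cond_spectral_inf_entropy P = ereal h" and Hs: "cond_spectral_sup_entropy P = ereal h"
    and h: "0 \<le> h" and g: "0 < \<gamma>" and gh: "0 < h \<Longrightarrow> \<gamma> < h"
    and e: "0 \<le> \<epsilon>" "\<epsilon> \<le> 1"
  shows "achievable_com P \<epsilon> ((h + \<gamma>) * (if 0 < h then 1 - \<epsilon> else 1))"
proof -
  define c where "c = (if 0 < h then 1 - \<epsilon> else 1)"
  have c: "0 \<le> c" "c \<le> 1" "1 - c \<le> \<epsilon>" using e by (auto simp: c_def)
  define Ln where "Ln n = nat \<lceil>real n * (h + \<gamma>)\<rceil>" for n :: nat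
  define B where "B n = {(x,y). 2 powr (-real (Ln n)) \<le> cond_prob P n x y \<and>
      (0 < h \<longrightarrow> cond_prob P n x y \<le> 2 powr (-(real n * (h - \<gamma>))))}" for n
  define \<eta> where "\<eta> n = (if 0 < h then 2 powr (-(real n * (h - \<gamma>))) else 0)" for n :: nat
  have Gex: "\<exists>G\<subseteq>B n. min c (measure (P n) (B n)) - \<eta> n \<le> measure (P n) G \<and> measure (P n) G \<le> c" for n
  proof (cases "0 < h")
    case True
    have at: "\<forall>z\<in>B n. pmf (P n) z \<le> \<eta> n"
    proof
      fix z assume z: "z \<in> B n"
      obtain x y where xy: "z = (x,y)" by (cases z)
      have "pmf (P n) (x,y) = cond_prob P n x y * pmf (map_pmf snd (P n)) y" by (rule pmf_eq_cond)
      also have "\<dots> \<le> cond_prob P n x y * 1"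
        by (intro mult_left_mono cond_prob_nonneg) (simp add: pmf_le_1)
      also have "\<dots> \<le> \<eta> n" using z True xy by (simp add: B_def \<eta>_def)
      finally show "pmf (P n) z \<le> \<eta> n" using xy by simp
    qed
    have "\<exists>G\<subseteq>B n. min c (measure (P n) (B n)) - \<eta> n \<le> measure (P n) G \<and> measure (P n) G \<le> min c (measure (P n) (B n))"
      by (rule select_subset[OF at]) (use c in \<open>auto simp: \<eta>_def\<close>)
    then obtain G0 where G0: "G0 \<subseteq> B n" "min c (measure (P n) (B n)) - \<eta> n \<le> measure (P n) G0"
      "measure (P n) G0 \<le> min c (measure (P n) (B n))" by blast
    have "measure (P n) G0 \<le> c" using G0(3) by linarith
    thus ?thesis using G0(1,2) by blast
  next
    case False
    hence "c = 1" by (simp add: c_def)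
    have "min c (measure (P n) (B n)) - \<eta> n \<le> measure (P n) (B n)" using False by (simp add: \<eta>_def)
    moreover have "measure (P n) (B n) \<le> c" using \<open>c = 1\<close> by simp
    ultimately show ?thesis by blast
  qed
  hence "\<forall>n. \<exists>G. G \<subseteq> B n \<and> min c (measure (P n) (B n)) - \<eta> n \<le> measure (P n) G \<and> measure (P n) G \<le> c"
    by blast
  from choice[OF this] obtain G where G0: "\<forall>n. G n \<subseteq> B n \<and> min c (measure (P n) (B n)) - \<eta> n \<le> measure (P n) (G n) \<and> measure (P n) (G n) \<le> c"
    by blast
  have G: "\<And>n. G n \<subseteq> B n"
    "\<And>n. min c (measure (P n) (B n)) - \<eta> n \<le> measure (P n) (G n)"
    "\<And>n. measure (P n) (G n) \<le> c" using G0 by auto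
  have "\<forall>n. \<exists>(enc :: 'a list \<Rightarrow> 'b list \<Rightarrow> bool list) (dec :: bool list \<Rightarrow> 'b list \<Rightarrow> 'a list).
     valid_code n enc \<and> error_prob P n enc dec \<le> 1 - measure (P n) (G n)
     \<and> exp_length P n enc \<le> ennreal (1 + real (Ln n) * measure (P n) (G n))"
  proof
    fix n show "\<exists>(enc :: 'a list \<Rightarrow> 'b list \<Rightarrow> bool list) (dec :: bool list \<Rightarrow> 'b list \<Rightarrow> 'a list).
     valid_code n enc \<and> error_prob P n enc dec \<le> 1 - measure (P n) (G n)
     \<and> exp_length P n enc \<le> ennreal (1 + real (Ln n) * measure (P n) (G n))"
    proof (rule code_exists)
      show "G n \<subseteq> {(x, y). 2 powr - real (Ln n) \<le> cond_prob P n x y}"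
        using G(1)[of n] unfolding B_def by blast
    qed
  qed
  hence "\<forall>n. \<exists>p :: ('a list \<Rightarrow> 'b list \<Rightarrow> bool list) \<times> (bool list \<Rightarrow> 'b list \<Rightarrow> 'a list).
     valid_code n (fst p) \<and> error_prob P n (fst p) (snd p) \<le> 1 - measure (P n) (G n)
     \<and> exp_length P n (fst p) \<le> ennreal (1 + real (Ln n) * measure (P n) (G n))" by simp
  from choice[OF this] obtain p where p: "\<forall>n. valid_code n (fst (p n)) \<and> error_prob P n (fst (p n)) (snd (p n)) \<le> 1 - measure (P n) (G n)
     \<and> exp_length P n (fst (p n)) \<le> ennreal (1 + real (Ln n) * measure (P n) (G n))" by blast
  define enc where "enc n = fst (p n)" for n
  define dec where "dec n = snd (p n)" for n
  have code: "\<And>n. valid_code n (enc n)" "\<And>n. error_prob P n (enc n) (dec n) \<le> 1 - measure (P n) (G n)"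
     "\<And>n. exp_length P n (enc n) \<le> ennreal (1 + real (Ln n) * measure (P n) (G n))"
    using p by (auto simp: enc_def dec_def)
  define m1 where "m1 n = measure (P n) {(x,y). cond_prob P n x y < 2 powr (-(real n * (h + \<gamma>)))}" for n
  define m2 where "m2 n = (if 0 < h then measure (P n) {(x,y). 2 powr (-(real n * (h - \<gamma>))) < cond_prob P n x y} else 0)" for n
  define u where "u n = m1 n + m2 n + \<eta> n" for n
  have mB: "1 - measure (P n) (B n) \<le> m1 n + m2 n" for n
  proof -
    have Lge: "real n * (h + \<gamma>) \<le> real (Ln n)" unfolding Ln_def by (rule real_nat_ceiling_ge)
    have "UNIV - B n \<subseteq> {(x,y). cond_prob P n x y < 2 powr (-(real n * (h + \<gamma>)))}
        \<union> (if 0 < h then {(x,y). 2 powr (-(real n * (h - \<gamma>))) < cond_prob P n x y} else {})"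
    proof
      fix z assume z: "z \<in> UNIV - B n"
      obtain x y where xy: "z = (x,y)" by (cases z)
      have pw: "2 powr (-real (Ln n)) \<le> 2 powr (-(real n * (h + \<gamma>)))"
        using Lge by (intro powr_mono) auto
      have "cond_prob P n x y < 2 powr (-real (Ln n)) \<Longrightarrow> cond_prob P n x y < 2 powr (-(real n * (h + \<gamma>)))"
        using pw by linarith
      thus "z \<in> {(x,y). cond_prob P n x y < 2 powr (-(real n * (h + \<gamma>)))}
        \<union> (if 0 < h then {(x,y). 2 powr (-(real n * (h - \<gamma>))) < cond_prob P n x y} else {})"
        using z xy by (auto simp: B_def not_le)
    qed
    hence "measure (P n) (UNIV - B n) \<le> measure (P n) ({(x,y). cond_prob P n x y < 2 powr (-(real n * (h + \<gamma>)))}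
        \<union> (if 0 < h then {(x,y). 2 powr (-(real n * (h - \<gamma>))) < cond_prob P n x y} else {}))"
      by (intro measure_pmf.finite_measure_mono) auto
    also have "\<dots> \<le> m1 n + m2 n"
      unfolding m1_def m2_def by (rule order.trans[OF measure_Un_le]) auto
    finally show ?thesis using measure_pmf.prob_compl[of "B n" "P n"] by simp
  qed
  have err: "error_prob P n (enc n) (dec n) \<le> \<epsilon> + u n" for n
  proof -
    have "1 - min c (measure (P n) (B n)) \<le> (1 - c) + (1 - measure (P n) (B n))"
      using c measure_pmf.prob_le_1[of "P n" "B n"] by (auto simp: min_def)
    thus ?thesis using code(2)[of n] G(2)[of n] mB[of n] c(3) unfolding u_def by linarith
  qed
  have u: "u \<longlonglongrightarrow> 0"
  proof -
    have t1: "m1 \<longlonglongrightarrow> 0" unfolding m1_def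
      by (rule tail_high) (use Hs g in simp)
    have t2: "m2 \<longlonglongrightarrow> 0"
    proof (cases "0 < h")
      case True
      have "(\<lambda>n. measure (P n) {(x,y). 2 powr (-(real n * (h - \<gamma>))) < cond_prob P n x y}) \<longlonglongrightarrow> 0"
        by (rule tail_low) (use Hi g in simp)
      thus ?thesis using True unfolding m2_def[abs_def] by simp
    qed (simp add: m2_def[abs_def])
    have t3: "\<eta> \<longlonglongrightarrow> 0"
    proof (cases "0 < h")
      case True
      have "(\<lambda>n. 2 * 2 powr (-((h - \<gamma>) * real n)) / 2) \<longlonglongrightarrow> 0 / 2"
        by (intro tendsto_divide powr_decay tendsto_const) (use gh True in auto)
      thus ?thesis using True unfolding \<eta>_def[abs_def] by (simp add: algebra_simps)
    qed (simp add: \<eta>_def[abs_def])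
    show ?thesis unfolding u_def using tendsto_add[OF tendsto_add[OF t1 t2] t3] by simp
  qed
  have rate: "ereal (1 / real n) * enn2ereal (exp_length P n (enc n)) \<le> ereal ((h + \<gamma>) * c + (1 + c) / real n)"
    if n: "0 < n" for n
  proof -
    have x0: "0 \<le> real n * (h + \<gamma>)" using h g by simp
    hence "real (Ln n) = real_of_int \<lceil>real n * (h + \<gamma>)\<rceil>" unfolding Ln_def by simp
    hence Lle: "real (Ln n) \<le> real n * (h + \<gamma>) + 1"
      using ceiling_correct[of "real n * (h + \<gamma>)"] by linarith
    have mg: "0 \<le> measure (P n) (G n)" by simp
    have "exp_length P n (enc n) \<le> ennreal (1 + real (Ln n) * measure (P n) (G n))" by (rule code(3))
    also have "\<dots> \<le> ennreal (1 + real (Ln n) * c)"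
      using G(3)[of n] by (intro ennreal_leI add_left_mono mult_left_mono) auto
    finally have E1: "enn2ereal (exp_length P n (enc n)) \<le> enn2ereal (ennreal (1 + real (Ln n) * c))"
      by (simp only: less_eq_ennreal.rep_eq)
    have E2: "enn2ereal (ennreal (1 + real (Ln n) * c)) = ereal (1 + real (Ln n) * c)"
      using c by (intro enn2ereal_ennreal) simp
    have "ereal (1 / real n) * enn2ereal (exp_length P n (enc n)) \<le> ereal (1 / real n) * ereal (1 + real (Ln n) * c)"
      by (rule ereal_mult_left_mono) (use E1 E2 in simp_all)
    also have "\<dots> = ereal ((1 + real (Ln n) * c) / real n)" by simp
    also have "(1 + real (Ln n) * c) / real n \<le> (1 + (real n * (h + \<gamma>) + 1) * c) / real n"
      using Lle c n by (intro divide_right_mono add_left_mono mult_right_mono) auto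
    also have "\<dots> = (h + \<gamma>) * c + (1 + c) / real n" using n by (simp add: field_simps)
    finally show ?thesis by simp
  qed
  show ?thesis unfolding achievable_com_def c_def[symmetric]
  proof (intro exI conjI allI impI)
    show "valid_code n (enc n)" for n by (rule code(1))
    show "limsup (\<lambda>n. ereal (error_prob P n (enc n) (dec n))) \<le> ereal \<epsilon>"
      by (rule limsup_le_lim[OF u]) (use err in simp)
    show "limsup (\<lambda>n. ereal (1 / real n) * enn2ereal (exp_length P n (enc n))) \<le> ereal ((h + \<gamma>) * c)"
      by (rule limsup_le_lim[OF lim_const_over_n[of "1 + c"]])
         (use rate in \<open>auto intro: eventually_mono[OF eventually_gt_at_top[of 0]]\<close>)
  qed
qed

lemma achievable_nonneg:
  assumes "achievable_com P \<epsilon> R"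
  shows "0 \<le> R"
proof -
  obtain enc dec where l2: "limsup (\<lambda>n. ereal (1 / real n) * enn2ereal (exp_length P n (enc n))) \<le> ereal R"
    using assms unfolding achievable_com_def by blast
  have "0 \<le> limsup (\<lambda>n. ereal (1 / real n) * enn2ereal (exp_length P n (enc n)))"
    by (intro le_Limsup) auto
  hence "(0::ereal) \<le> ereal R" using l2 by (rule order.trans)
  thus ?thesis by simp
qed

lemma achievable_zero:
  fixes P :: "nat \<Rightarrow> ('a list \<times> 'b list) pmf"
  shows "achievable_com P 1 0"
  unfolding achievable_com_def
proof (intro exI conjI allI impI)
  let ?enc = "\<lambda>(n::nat) (x::'a list) (y::'b list). ([]::bool list)"
  let ?dec = "\<lambda>(n::nat) (c::bool list) (y::'b list). (undefined::'a list)"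
  show "valid_code n (?enc n)" for n
    by (simp add: valid_code_def prefix_free_def)
  show "limsup (\<lambda>n. ereal (error_prob P n (?enc n) (?dec n))) \<le> ereal 1"
    by (rule limsup_le_lim[where u="\<lambda>n. 0"]) (auto simp: error_prob_def)
  show "limsup (\<lambda>n. ereal (1 / real n) * enn2ereal (exp_length P n (?enc n))) \<le> ereal 0"
    by (rule limsup_le_lim[where u="\<lambda>n. 0"]) (auto simp: exp_length_def zero_ennreal.rep_eq)
qed

theorem corollary1:
  fixes P :: "nat \<Rightarrow> ('a::countable list \<times> 'b::countable list) pmf"
    and \<epsilon> :: real
  assumes "general_source P"
    and "cond_spectral_inf_entropy P = cond_spectral_sup_entropy P"
    and "0 \<le> \<epsilon>" and "\<epsilon> \<le> 1"
  shows "R_com P \<epsilon> = ereal (1 - \<epsilon>) * cond_spectral_inf_entropy P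
       \<and> R_com P \<epsilon> = ereal (1 - \<epsilon>) * cond_spectral_sup_entropy P"
proof -
  define H where "H = cond_spectral_inf_entropy P"
  have H0: "0 \<le> H" unfolding H_def by (rule inf_entropy_nonneg)
  have main: "R_com P \<epsilon> = ereal (1 - \<epsilon>) * H"
  proof (cases "\<epsilon> = 1")
    case True
    have "R_com P \<epsilon> = 0"
      unfolding R_com_def
    proof (rule antisym)
      show "Inf (ereal ` {R. achievable_com P \<epsilon> R}) \<le> 0"
        using achievable_zero[of P] True by (intro Inf_lower2[of "ereal 0"]) auto
      show "0 \<le> Inf (ereal ` {R. achievable_com P \<epsilon> R})"
        by (intro Inf_greatest) (auto dest: achievable_nonneg)
    qed
    thus ?thesis using True by simp
  next
    case False
    hence e1: "\<epsilon> < 1" using assms by simp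
    show ?thesis
    proof (cases H)
      case PInf
      have "{R. achievable_com P \<epsilon> R} = {}"
      proof safe
        fix R assume ach: "achievable_com P \<epsilon> R"
        define a where "a = (\<bar>R\<bar> + 1) / (1 - \<epsilon>)"
        have a: "0 < a" using e1 by (simp add: a_def)
        have "a * (1 - \<epsilon>) \<le> R"
          by (rule converse[OF ach, of "a + 1"]) (use PInf a in \<open>auto simp: H_def\<close>)
        moreover have "a * (1 - \<epsilon>) = \<bar>R\<bar> + 1" using e1 by (simp add: a_def)
        ultimately show "R \<in> {}" by linarith
      qed
      hence "R_com P \<epsilon> = \<infinity>" by (simp add: R_com_def top_ereal_def)
      thus ?thesis using PInf e1 by simp
    next
      case MInf thus ?thesis using H0 by simp
    next
      case (real h)
      have h: "0 \<le> h" using H0 real by simp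
      have Hi: "cond_spectral_inf_entropy P = ereal h" using real H_def by simp
      have Hs: "cond_spectral_sup_entropy P = ereal h" using real H_def assms(2) by simp
      have lower: "ereal ((1 - \<epsilon>) * h) \<le> R_com P \<epsilon>"
        unfolding R_com_def
      proof (intro Inf_greatest, clarify)
        fix R assume ach: "achievable_com P \<epsilon> R"
        have R0: "0 \<le> R" by (rule achievable_nonneg[OF ach])
        show "ereal ((1 - \<epsilon>) * h) \<le> ereal R"
        proof (cases "0 < h")
          case False thus ?thesis using h R0 by simp
        next
          case True
          show ?thesis
          proof (rule ccontr)
            assume "\<not> ?thesis"
            hence lt: "R < (1 - \<epsilon>) * h" by simp
            define a where "a = (R / (1 - \<epsilon>) + h) / 2"
            have q: "R / (1 - \<epsilon>) < h" using lt e1 by (simp add: divide_less_eq mult.commute)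
            have a0: "0 < a" using R0 e1 True by (simp add: a_def add_nonneg_pos)
            have ah: "a < h" using q by (simp add: a_def)
            have "a * (1 - \<epsilon>) \<le> R"
              by (rule converse[OF ach, of "(a + h) / 2" a]) (use Hi a0 ah in simp_all)
            moreover have avg: "\<And>r::real. r < h \<Longrightarrow> r < (r + h) / 2" by simp
            have "R / (1 - \<epsilon>) < a" unfolding a_def by (rule avg[OF q])
            hence "R < a * (1 - \<epsilon>)" using e1 by (simp add: divide_less_eq)
            ultimately show False by simp
          qed
        qed
      qed
      define c where "c = (if 0 < h then 1 - \<epsilon> else 1)"
      have hc: "h * c = (1 - \<epsilon>) * h" using h by (simp add: c_def)
      have c: "0 \<le> c" "c \<le> 1" using assms by (auto simp: c_def)
      have upper: "R_com P \<epsilon> \<le> ereal ((1 - \<epsilon>) * h)"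
      proof (rule ereal_le_epsilon2)
        fix e :: real assume e: "0 < e"
        define \<gamma> where "\<gamma> = (if 0 < h then min e (h / 2) else e)"
        have g: "0 < \<gamma>" "0 < h \<Longrightarrow> \<gamma> < h" "\<gamma> \<le> e" using e by (auto simp: \<gamma>_def)
        have ach: "achievable_com P \<epsilon> ((h + \<gamma>) * c)"
          unfolding c_def by (rule achievability[OF Hi Hs h g(1) g(2) assms(3,4)])
        have "R_com P \<epsilon> \<le> ereal ((h + \<gamma>) * c)"
          unfolding R_com_def using ach by (intro Inf_lower) auto
        also have "(h + \<gamma>) * c \<le> (1 - \<epsilon>) * h + e"
        proof -
          have "\<gamma> * c \<le> \<gamma> * 1" using c g by (intro mult_left_mono) auto
          thus ?thesis using hc g(3) by (simp add: algebra_simps)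
        qed
        finally show "R_com P \<epsilon> \<le> ereal ((1 - \<epsilon>) * h) + ereal e" by simp
      qed
      have "R_com P \<epsilon> = ereal ((1 - \<epsilon>) * h)" using lower upper by simp
      thus ?thesis using real by simp
    qed
  qed
  show ?thesis using main assms(2) by (simp add: H_def)
qed

end
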